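(* Let $m,n$ be natural numbers with $\min\{m,n\}\ge4$, let $\{|e_i\rangle\}_{i=0}^{m-1}$ and $\{|f_j\rangle\}_{j=0}^{n-1}$ be the canonical bases of $\mathbb{C}^m$ and $\mathbb{C}^n$, and let $a=3$ or $a>5$ (real). Let $$\mathcal{S}=\mathrm{span}\{|e_{i-2}\rangle\otimes|f_{j+1}\rangle-a|e_{i-1}\rangle\otimes|f_j\rangle+a|e_i\rangle\otimes|f_{j-1}\rangle-|e_{i+1}\rangle\otimes|f_{j-2}\rangle:\ 2\le i\le m-2,\ 2\le j\le n-2\}\subset\mathbb{C}^m\otimes\mathbb{C}^n.$$ Then $\mathcal{S}$ does not contain any non-zero vector of Schmidt rank $\le3$, and $\dim\mathcal{S}=(m-3)(n-3)$.
   Context: The Schmidt rank of $|\psi\rangle=\sum_{i,j}c_{ij}|e_i\rangle\otimes|f_j\rangle\in\mathbb{C}^m\otimes\mathbb{C}^n$ is the minimal number of terms in a decomposition $|\psi\rangle=\sum_{l=1}^r|u_l\rangle\otimes|v_l\rangle$; equivalently, the rank of the matrix $[c_{ij}]$. (The paper presents $\mathcal{S}$ as the direct sum over $3\le d\le m+n-5$ of the spans of the generators with $i+j=d+1$, which is the same subspace.) *)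

theory Defs
  imports Complex_Main "HOL-Library.Function_Algebras"
begin

text \<open>A vector of C^m \<otimes> C^n is represented by its coefficient function
  c :: nat \<Rightarrow> nat \<Rightarrow> complex, c i j being the coefficient of e_i \<otimes> f_j
  (only the values for i < m, j < n are meaningful; all vectors considered
  here vanish outside that box).\<close>

type_synonym tensor = "nat \<Rightarrow> nat \<Rightarrow> complex"

definition tscale :: "complex \<Rightarrow> tensor \<Rightarrow> tensor" where
  "tscale c \<psi> = (\<lambda>i j. c * \<psi> i j)"

lemma vector_space_tscale: "vector_space tscale"
  by unfold_locales (auto simp: tscale_def algebra_simps fun_eq_iff)

abbreviation tspan :: "tensor set \<Rightarrow> tensor set" where
  "tspan \<equiv> module.span tscale"

abbreviation tdim :: "tensor set \<Rightarrow> nat" where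
  "tdim \<equiv> vector_space.dim tscale"

definition basis_tensor :: "nat \<Rightarrow> nat \<Rightarrow> tensor" where
  "basis_tensor p q = (\<lambda>i j. if i = p \<and> j = q then 1 else 0)"

definition schmidt_rank :: "nat \<Rightarrow> nat \<Rightarrow> tensor \<Rightarrow> nat" where
  "schmidt_rank m n \<psi> = (LEAST r. \<exists>u v :: nat \<Rightarrow> nat \<Rightarrow> complex.
      \<forall>i<m. \<forall>j<n. \<psi> i j = (\<Sum>l<r. u l i * v l j))"

definition gen5 :: "real \<Rightarrow> nat \<Rightarrow> nat \<Rightarrow> tensor" where
  "gen5 a i j = basis_tensor (i-2) (j+1) - tscale (complex_of_real a) (basis_tensor (i-1) j)
     + tscale (complex_of_real a) (basis_tensor i (j-1)) - basis_tensor (i+1) (j-2)"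

definition S5 :: "nat \<Rightarrow> nat \<Rightarrow> real \<Rightarrow> tensor set" where
  "S5 m n a = tspan {gen5 a i j | i j. 2 \<le> i \<and> i \<le> m - 2 \<and> 2 \<le> j \<and> j \<le> n - 2}"

end

theory Submission
  imports Defs
begin



lemma core_real:
  fixes al be ga t0 t1 t2 :: real and p q s :: nat
  assumes pq: "p < q" and qs: "q < s" and t0: "0 < t0" and t01: "t0 < t1" and t12: "t1 < t2"
    and f: "\<And>t. t \<in> {t0,t1,t2} \<Longrightarrow> al*t^p + be*t^q + ga*t^s = 0"
  shows "al = 0 \<and> be = 0 \<and> ga = 0"
proof -
  define u where "u = q - p"
  define w where "w = s - p"
  have u0: "u > 0" and uw: "u < w" using pq qs by (auto simp: u_def w_def)
  define g where "g t = al + be*t^u + ga*t^w" for t :: real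
  have gz: "g t = 0" if "t \<in> {t0,t1,t2}" for t
  proof -
    have tp: "t > 0" using that t0 t01 t12 by auto
    have "al*t^p + be*t^q + ga*t^s = t^p * g t"
      using pq qs by (simp add: g_def u_def w_def algebra_simps flip: power_add)
    with f[OF that] tp show ?thesis by simp
  qed
  define g' where "g' t = be*(of_nat u)*t^(u-1) + ga*(of_nat w)*t^(w-1)" for t :: real
  have dg: "DERIV g t :> g' t" for t
    unfolding g_def g'_def by (auto intro!: derivative_eq_intros)
  have cont: "continuous_on A g" for A
    unfolding g_def by (intro continuous_intros)
  have rz: "\<exists>z. a < z \<and> z < b \<and> g' z = 0" if ab: "a < b" "g a = 0" "g b = 0" for a b
  proof -
    obtain z where z: "a < z" "z < b" "DERIV g z :> 0"
    proof -
      have "\<exists>z. a < z \<and> z < b \<and> DERIV g z :> 0"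
        using ab by (intro Rolle) (auto intro: cont real_differentiable_def[THEN iffD2] dg)
      then show ?thesis using that by blast
    qed
    then show ?thesis using DERIV_unique[OF dg z(3)] by blast
  qed
  obtain z1 where z1: "t0 < z1" "z1 < t1" "g' z1 = 0" using rz[OF t01] gz by auto
  obtain z2 where z2: "t1 < z2" "z2 < t2" "g' z2 = 0" using rz[OF t12] gz by auto
  define h where "h z = be*(of_nat u) + ga*(of_nat w)*z^(w-u)" for z :: real
  have hz: "h z = 0" if "z > 0" "g' z = 0" for z
  proof -
    have "g' z = z^(u-1) * h z"
      using u0 uw by (simp add: g'_def h_def algebra_simps flip: power_add)
    with that show ?thesis by simp
  qed
  have h1: "h z1 = 0" using hz z1 t0 by auto
  have h2: "h z2 = 0" using hz z2 t0 z1 by auto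
  have "z1^(w-u) < z2^(w-u)"
    using z1 z2 t0 uw by (intro power_strict_mono) auto
  moreover have "ga*(of_nat w)*(z1^(w-u) - z2^(w-u)) = 0"
  proof -
    have "ga*(of_nat w)*(z1^(w-u) - z2^(w-u)) = h z1 - h z2" by (simp add: h_def algebra_simps)
    then show ?thesis using h1 h2 by simp
  qed
  ultimately have "ga = 0" using uw by auto
  moreover then have "be = 0" using h1 u0 by (simp add: h_def)
  moreover have "al = 0" using gz[of t0] calculation by (simp add: g_def)
  ultimately show ?thesis by simp
qed



lemma pad3:
  fixes Z :: "nat set"
  assumes "finite Z" "card Z \<le> 3"
  shows "\<exists>p q s. p < q \<and> q < s \<and> Z \<subseteq> {p,q,s}"
proof -
  define xs where "xs = sorted_list_of_set Z"
  define B where "B = Max (insert 0 Z)"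
  define ys where "ys = xs @ [B+1,B+2,B+3]"
  have sx: "sorted_wrt (<) xs" and setx: "set xs = Z" and lx: "length xs \<le> 3"
    using assms by (auto simp: xs_def)
  have xB: "x \<le> B" if "x \<in> Z" for x using assms that by (simp add: B_def)
  have sy: "sorted_wrt (<) ys"
  proof -
    have "x < B+1 \<and> x < B+2 \<and> x < B+3" if "x \<in> set xs" for x using xB[of x] that setx by auto
    then show ?thesis unfolding ys_def using sx by (auto simp: sorted_wrt_append)
  qed
  have ly: "length ys \<ge> 3" by (simp add: ys_def)
  have "ys!0 < ys!1" "ys!1 < ys!2" using sy ly by (auto simp: sorted_wrt_iff_nth_less)
  moreover have "Z \<subseteq> {ys!0, ys!1, ys!2}"
  proof
    fix x assume "x \<in> Z"
    then obtain i where i: "i < length xs" "xs!i = x" using setx by (metis in_set_conv_nth)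
    then have "ys!i = x" by (simp add: ys_def nth_append)
    moreover have "i = 0 \<or> i = 1 \<or> i = 2" using i lx by auto
    ultimately show "x \<in> {ys!0, ys!1, ys!2}" by auto
  qed
  ultimately show ?thesis by blast
qed

lemma core_mom:
  fixes al be ga :: complex and p q s :: nat
  assumes pq: "p < q" and qs: "q < s"
    and e0: "al + be + ga = 0"
    and e1: "al * of_nat p + be * of_nat q + ga * of_nat s = 0"
    and e2: "al * of_nat p ^ 2 + be * of_nat q ^ 2 + ga * of_nat s ^ 2 = 0"
  shows "al = 0 \<and> be = 0 \<and> ga = 0"
proof -
  define P where "P = (of_nat p :: complex)"
  define Q where "Q = (of_nat q :: complex)"
  define S where "S = (of_nat s :: complex)"
  have d: "P \<noteq> Q" "Q \<noteq> S" "P \<noteq> S" using pq qs by (auto simp: P_def Q_def S_def)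
  have E0: "al + be + ga = 0" and E1: "al*P + be*Q + ga*S = 0" and E2: "al*P^2 + be*Q^2 + ga*S^2 = 0"
    using e0 e1 e2 by (auto simp: P_def Q_def S_def)
  have "ga * ((S-P)*(S-Q)) = (al*P^2 + be*Q^2 + ga*S^2) - (P+Q)*(al*P + be*Q + ga*S) + P*Q*(al + be + ga)"
    by (simp add: algebra_simps power2_eq_square)
  then have g: "ga = 0" using E0 E1 E2 d by simp
  have "be * ((Q-P)*(Q-S)) = (al*P^2 + be*Q^2 + ga*S^2) - (P+S)*(al*P + be*Q + ga*S) + P*S*(al + be + ga)"
    by (simp add: algebra_simps power2_eq_square)
  then have b: "be = 0" using E0 E1 E2 d by simp
  show ?thesis using g b E0 by simp
qed



definition sh :: "nat \<Rightarrow> (nat \<Rightarrow> complex) \<Rightarrow> nat \<Rightarrow> complex" where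
  "sh e r x = (if e \<le> x then r (x - e) else 0)"

lemma sum_sh:
  fixes F r :: "nat \<Rightarrow> complex"
  assumes e: "e \<le> 3" and supp: "\<forall>k>N. r k = 0"
  shows "(\<Sum>x\<le>N+3. F x * sh e r x) = (\<Sum>k\<le>N. F (k+e) * r k)"
proof -
  have "(\<Sum>x\<le>N+3. F x * sh e r x) = (\<Sum>x\<in>(\<lambda>k. k+e) ` {..N}. F x * sh e r x)"
  proof (rule sum.mono_neutral_right)
    show "(\<lambda>k. k+e) ` {..N} \<subseteq> {..N+3}" using e by auto
    show "\<forall>x\<in>{..N+3} - (\<lambda>k. k+e) ` {..N}. F x * sh e r x = 0"
    proof
      fix x assume x: "x \<in> {..N+3} - (\<lambda>k. k+e) ` {..N}"
      show "F x * sh e r x = 0"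
      proof (cases "e \<le> x")
        case True
        then have "x = (x - e) + e" by simp
        then have "x - e > N" using x by (metis DiffD2 atMost_iff imageI not_le)
        then show ?thesis using supp True by (simp add: sh_def)
      qed (simp add: sh_def)
    qed
  qed simp
  also have "\<dots> = (\<Sum>k\<le>N. F (k+e) * sh e r (k+e))"
    by (subst sum.reindex) (auto simp: inj_on_def)
  also have "\<dots> = (\<Sum>k\<le>N. F (k+e) * r k)" by (simp add: sh_def)
  finally show ?thesis .
qed



lemma tri_rank:
  fixes M u v :: "nat \<Rightarrow> nat \<Rightarrow> complex"
  assumes "finite A" "\<forall>a\<in>A. \<forall>b\<in>A. a < b \<longrightarrow> M a b = 0" "\<forall>a\<in>A. M a a \<noteq> 0"
    "\<forall>a\<in>A. \<forall>b\<in>A. M a b = (\<Sum>l<r. u l a * v l b)"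
  shows "card A \<le> r"
  using assms
proof (induction r arbitrary: A M u)
  case 0
  then have "A = {}" by auto
  then show ?case by simp
next
  case (Suc r)
  show ?case
  proof (cases "\<forall>a\<in>A. u r a = 0")
    case True
    have "\<forall>a\<in>A. \<forall>b\<in>A. M a b = (\<Sum>l<r. u l a * v l b)"
      using Suc.prems(4) True by simp
    then have "card A \<le> r" using Suc.IH[of A M u] Suc.prems by blast
    then show ?thesis by simp
  next
    case False
    define a0 where "a0 = Min {a\<in>A. u r a \<noteq> 0}"
    have fin: "finite {a\<in>A. u r a \<noteq> 0}" using Suc.prems(1) by simp
    have ne: "{a\<in>A. u r a \<noteq> 0} \<noteq> {}" using False by auto
    have a0A: "a0 \<in> A" and ua0: "u r a0 \<noteq> 0"
      using Min_in[OF fin ne] unfolding a0_def by auto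
    have amin: "u r a = 0" if "a \<in> A" "a < a0" for a
      using Min_le[OF fin, of a] that unfolding a0_def by fastforce
    define cf where "cf a = u r a / u r a0" for a
    define M' where "M' a b = M a b - cf a * M a0 b" for a b
    define u' where "u' l a = u l a - cf a * u l a0" for l a
    define A' where "A' = A - {a0}"
    have cfa: "cf a = 0" if "a \<in> A" "a < a0" for a using amin[OF that] by (simp add: cf_def)
    have rep: "\<forall>a\<in>A'. \<forall>b\<in>A'. M' a b = (\<Sum>l<r. u' l a * v l b)"
    proof (intro ballI)
      fix a b assume a: "a \<in> A'" and b: "b \<in> A'"
      have "M' a b = (\<Sum>l<Suc r. u l a * v l b) - cf a * (\<Sum>l<Suc r. u l a0 * v l b)"
        using Suc.prems(4) a b a0A by (simp add: M'_def A'_def)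
      also have "\<dots> = (\<Sum>l<r. u' l a * v l b) + (u r a - cf a * u r a0) * v r b"
        by (simp add: u'_def sum_distrib_left sum_subtractf algebra_simps)
      also have "u r a - cf a * u r a0 = 0" using ua0 by (simp add: cf_def)
      finally show "M' a b = (\<Sum>l<r. u' l a * v l b)" by simp
    qed
    have tri: "\<forall>a\<in>A'. \<forall>b\<in>A'. a < b \<longrightarrow> M' a b = 0"
    proof (intro ballI impI)
      fix a b assume a: "a \<in> A'" and b: "b \<in> A'" and ab: "a < b"
      have Mab: "M a b = 0" using Suc.prems(2) a b ab by (auto simp: A'_def)
      show "M' a b = 0"
      proof (cases "a < a0")
        case True
        then show ?thesis using cfa[of a] a Mab by (auto simp: M'_def A'_def)
      next
        case False
        then have "a0 < b" using a ab by (auto simp: A'_def)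
        then have "M a0 b = 0" using Suc.prems(2) a0A b by (auto simp: A'_def)
        then show ?thesis using Mab by (simp add: M'_def)
      qed
    qed
    have diag: "\<forall>a\<in>A'. M' a a \<noteq> 0"
    proof
      fix a assume a: "a \<in> A'"
      have Maa: "M a a \<noteq> 0" using Suc.prems(3) a by (auto simp: A'_def)
      show "M' a a \<noteq> 0"
      proof (cases "a < a0")
        case True
        then show ?thesis using cfa[of a] a Maa by (auto simp: M'_def A'_def)
      next
        case False
        then have "a0 < a" using a by (auto simp: A'_def)
        then have "M a0 a = 0" using Suc.prems(2) a0A a by (auto simp: A'_def)
        then show ?thesis using Maa by (simp add: M'_def)
      qed
    qed
    have "card A' \<le> r"
      using Suc.IH[of A' M' u'] rep tri diag Suc.prems(1) by (simp add: A'_def)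
    moreover have "card A = Suc (card A')"
      using a0A Suc.prems(1) unfolding A'_def by (metis card_Suc_Diff1)
    ultimately show ?thesis by simp
  qed
qed



lemma sparse:
  fixes rho g :: "nat \<Rightarrow> complex" and a :: real
  assumes a: "a = 3 \<or> a > 3" and supp: "\<forall>k>N. rho k = 0" and nz: "rho k0 \<noteq> 0"
    and gdef: "\<forall>x\<le>N+3. g x = rho x - of_real a * sh 1 rho x + of_real a * sh 2 rho x - sh 3 rho x"
  shows "\<not> card {x. x \<le> N+3 \<and> g x \<noteq> 0} \<le> 3"
proof
  define Z where "Z = {x. x \<le> N+3 \<and> g x \<noteq> 0}"
  assume "card {x. x \<le> N+3 \<and> g x \<noteq> 0} \<le> 3"
  then have cZ: "card Z \<le> 3" by (simp add: Z_def)
  have fZ: "finite Z" by (simp add: Z_def)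
  obtain p q s where pq: "p < q" and qs: "q < s" and Zs: "Z \<subseteq> {p,q,s}" using pad3[OF fZ cZ] by blast
  define c where "c x = (if x \<in> Z then g x else 0)" for x
  have sh0: "sh 0 rho = rho" by (simp add: sh_def fun_eq_iff)
  have key: "(\<Sum>x\<in>{p,q,s}. F x * c x) = (\<Sum>k\<le>N. (F k - of_real a * F (k+1) + of_real a * F (k+2) - F (k+3)) * rho k)"
    for F :: "nat \<Rightarrow> complex"
  proof -
    have "(\<Sum>x\<in>{p,q,s}. F x * c x) = (\<Sum>x\<in>Z. F x * c x)"
      using Zs by (intro sum.mono_neutral_right) (auto simp: c_def)
    also have "\<dots> = (\<Sum>x\<in>Z. F x * g x)" by (simp add: c_def)
    also have "\<dots> = (\<Sum>x\<le>N+3. F x * g x)"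
      by (intro sum.mono_neutral_left) (auto simp: Z_def)
    also have "\<dots> = (\<Sum>x\<le>N+3. F x * sh 0 rho x - of_real a * (F x * sh 1 rho x)
                  + of_real a * (F x * sh 2 rho x) - F x * sh 3 rho x)"
    proof (intro sum.cong refl)
      fix x assume "x \<in> {..N+3}"
      then have "g x = rho x - of_real a * sh 1 rho x + of_real a * sh 2 rho x - sh 3 rho x" using gdef by simp
      then show "F x * g x = F x * sh 0 rho x - of_real a * (F x * sh 1 rho x)
                  + of_real a * (F x * sh 2 rho x) - F x * sh 3 rho x" by (simp only: sh0) (simp add: algebra_simps)
    qed
    also have "\<dots> = (\<Sum>x\<le>N+3. F x * sh 0 rho x) - of_real a * (\<Sum>x\<le>N+3. F x * sh 1 rho x)
                  + of_real a * (\<Sum>x\<le>N+3. F x * sh 2 rho x) - (\<Sum>x\<le>N+3. F x * sh 3 rho x)"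
      by (simp add: sum.distrib sum_subtractf sum_distrib_left)
    also have "\<dots> = (\<Sum>k\<le>N. F k * rho k) - of_real a * (\<Sum>k\<le>N. F (k+1) * rho k)
                  + of_real a * (\<Sum>k\<le>N. F (k+2) * rho k) - (\<Sum>k\<le>N. F (k+3) * rho k)"
      using sum_sh[OF _ supp, of _ F] by simp
    also have "\<dots> = (\<Sum>k\<le>N. (F k - of_real a * F (k+1) + of_real a * F (k+2) - F (k+3)) * rho k)"
      by (simp add: sum.distrib sum_subtractf sum_distrib_left algebra_simps)
    finally show ?thesis .
  qed
  have dist: "p \<noteq> q" "q \<noteq> s" "p \<noteq> s" using pq qs by auto
  have c0: "c p = 0 \<and> c q = 0 \<and> c s = 0"
  proof (cases "a = 3")
    case True
    have m: "(\<Sum>x\<in>{p,q,s}. of_nat x ^ j * c x) = 0" if "j \<le> 2" for j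
    proof -
      have "j = 0 \<or> j = 1 \<or> j = 2" using that by auto
      then have "\<forall>k. (of_nat k ^ j - of_real a * of_nat (k+1) ^ j + of_real a * of_nat (k+2) ^ j
               - of_nat (k+3) ^ j :: complex) = 0"
        using True by (auto simp: algebra_simps power2_eq_square)
      then show ?thesis using key[of "\<lambda>x. of_nat x ^ j"] by simp
    qed
    show ?thesis
      using core_mom[OF pq qs, of "c p" "c q" "c s"] m[of 0] m[of 1] m[of 2] dist
      by (simp add: algebra_simps)
  next
    case False
    then have a3: "a > 3" using a by auto
    define dl where "dl = sqrt ((a-1)^2 - 4)"
    have "(a-1)^2 - 4 = (a-3)*(a+1)" by (simp add: power2_eq_square algebra_simps)
    moreover have "(a-3)*(a+1) > 0" using a3 by (intro mult_pos_pos) auto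
    ultimately have nn: "(a-1)^2 - 4 \<ge> 0" by simp
    then have dl2: "dl^2 = (a-1)^2 - 4" unfolding dl_def by (metis real_sqrt_pow2)
    have dl0: "dl \<ge> 0" unfolding dl_def using nn by simp
    have dla: "dl < a - 1"
    proof -
      have "dl^2 < (a-1)^2" using dl2 by simp
      then show ?thesis using dl0 a3 by (smt (verit) power_mono)
    qed
    have dlb: "a - 3 < dl"
    proof -
      have "(a-3)^2 < dl^2" using dl2 a3 by (simp add: power2_eq_square algebra_simps)
      then show ?thesis using dl0 a3 by (smt (verit) power_mono)
    qed
    define t1 where "t1 = ((a-1) - dl)/2"
    define t2 where "t2 = ((a-1) + dl)/2"
    have r1: "t1^2 - (a-1)*t1 + 1 = 0" unfolding t1_def using dl2 by (simp add: power2_eq_square field_simps)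
    have r2: "t2^2 - (a-1)*t2 + 1 = 0" unfolding t2_def using dl2 by (simp add: power2_eq_square field_simps)
    have o: "0 < t1" "t1 < 1" "1 < t2" using dla dlb dl0 a3 by (auto simp: t1_def t2_def)
    have ev: "(\<Sum>x\<in>{p,q,s}. of_real t ^ x * c x) = 0" if "t^2 - (a-1)*t + 1 = 0 \<or> t = 1" for t
    proof -
      have P: "1 - a*t + a*t^2 - t^3 = 0"
      proof -
        have "1 - a*t + a*t^2 - t^3 = - (t - 1) * (t^2 - (a-1)*t + 1)" by (simp add: algebra_simps power2_eq_square power3_eq_cube)
        then show ?thesis using that by auto
      qed
      have "\<forall>k. (of_real t ^ k - of_real a * of_real t ^ (k+1) + of_real a * of_real t ^ (k+2) - of_real t ^ (k+3) :: complex)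
              = of_real (t^k * (1 - a*t + a*t^2 - t^3))"
        by (simp add: algebra_simps power_add power2_eq_square power3_eq_cube)
      then show ?thesis using key[of "\<lambda>x. of_real t ^ x"] P by simp
    qed
    have ev3: "c p * of_real t ^ p + c q * of_real t ^ q + c s * of_real t ^ s = 0"
      if "t \<in> {t1, 1, t2}" for t
      using ev[of t] that r1 r2 dist by (auto simp: algebra_simps)
    have re: "Re (c p) * t ^ p + Re (c q) * t ^ q + Re (c s) * t ^ s = 0" if "t \<in> {t1, 1, t2}" for t
      using arg_cong[OF ev3[OF that], of Re] by (simp flip: of_real_power)
    have im: "Im (c p) * t ^ p + Im (c q) * t ^ q + Im (c s) * t ^ s = 0" if "t \<in> {t1, 1, t2}" for t
      using arg_cong[OF ev3[OF that], of Im] by (simp flip: of_real_power)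
    have "Re (c p) = 0 \<and> Re (c q) = 0 \<and> Re (c s) = 0"
      using core_real[OF pq qs o(1) o(2) o(3)] re by blast
    moreover have "Im (c p) = 0 \<and> Im (c q) = 0 \<and> Im (c s) = 0"
      using core_real[OF pq qs o(1) o(2) o(3)] im by blast
    ultimately show ?thesis by (simp add: complex_eq_iff)
  qed
  have Z0: "Z = {}"
  proof -
    have "x \<notin> Z" for x
    proof
      assume xZ: "x \<in> Z"
      then have "c x = 0" using Zs c0 by auto
      then show False using xZ by (simp add: c_def Z_def)
    qed
    then show ?thesis by auto
  qed
  define k1 where "k1 = (LEAST k. rho k \<noteq> 0)"
  have k1: "rho k1 \<noteq> 0" using nz unfolding k1_def by (rule LeastI)
  have k1b: "rho k = 0" if "k < k1" for k using not_less_Least[OF that[unfolded k1_def]] by simp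
  have k1N: "k1 \<le> N" using k1 supp by (meson not_le)
  have "sh e rho k1 = 0" if "e \<ge> 1" for e using k1b that by (simp add: sh_def)
  then have "g k1 = rho k1" using gdef k1N by simp
  moreover have "g k1 = 0" using Z0 k1N by (auto simp: Z_def)
  ultimately show False using k1 by simp
qed



lemma tsum_apply: "(sum (f :: 'b \<Rightarrow> tensor) A) x y = (\<Sum>a\<in>A. f a x y)"
  by (induction A rule: infinite_finite_induct) auto

lemma gen5_apply:
  "gen5 a i j x y = (if x = i-2 \<and> y = j+1 then 1 else 0) - complex_of_real a * (if x = i-1 \<and> y = j then 1 else 0)
     + complex_of_real a * (if x = i \<and> y = j-1 then 1 else 0) - (if x = i+1 \<and> y = j-2 then 1 else 0)"
  by (simp add: gen5_def basis_tensor_def tscale_def)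

lemma gen5_at:
  assumes "2 \<le> i" "2 \<le> j" "2 \<le> i0" "2 \<le> j0" "i \<le> i0"
  shows "gen5 a i j (i0+1) (j0-2) = (if i = i0 \<and> j = j0 then -1 else 0)"
proof -
  have c: "(i0+1 = i-2 \<and> j0-2 = j+1) = False" "(i0+1 = i-1 \<and> j0-2 = j) = False"
    "(i0+1 = i \<and> j0-2 = j-1) = False" "(i0+1 = i+1 \<and> j0-2 = j-2) = (i = i0 \<and> j = j0)"
    using assms by auto
  show ?thesis unfolding gen5_apply c by simp
qed

lemma gen5_inj:
  assumes "2 \<le> i" "2 \<le> j" "2 \<le> i'" "2 \<le> j'" "a \<noteq> 1" "a \<noteq> -1"
    and g: "gen5 a i' j' (i+1) (j-2) = -1"
  shows "i' = i \<and> j' = j"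
proof (rule ccontr)
  assume ne: "\<not> (i' = i \<and> j' = j)"
  have c4: "(i+1 = i'+1 \<and> j-2 = j'-2) = False" using ne assms(1-4) by auto
  have A: "complex_of_real a \<noteq> 1" "complex_of_real a \<noteq> -1" using assms(5,6)
    by (metis of_real_1 of_real_eq_iff, metis of_real_1 of_real_eq_iff of_real_minus)
  define X where "X = i+1"
  define Y where "Y = j-2"
  have g': "gen5 a i' j' X Y = -1" using g by (simp add: X_def Y_def)
  have c4': "(X = i'+1 \<and> Y = j'-2) = False" using c4 by (simp add: X_def Y_def)
  have e: "gen5 a i' j' X Y = (if X = i'-2 \<and> Y = j'+1 then 1 else 0) - complex_of_real a * (if X = i'-1 \<and> Y = j' then 1 else 0)
     + complex_of_real a * (if X = i' \<and> Y = j'-1 then 1 else 0)"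
    unfolding gen5_apply c4' by simp
  consider "X = i'-2" | "X = i'-1" | "X = i'" | "X \<noteq> i'-2 \<and> X \<noteq> i'-1 \<and> X \<noteq> i'" by blast
  then show False
  proof cases
    case 1
    then have "X \<noteq> i'-1" "X \<noteq> i'" using assms(3) by auto
    then have "gen5 a i' j' X Y = (if X = i'-2 \<and> Y = j'+1 then 1 else 0)" using e by simp
    then show False using g' by (simp split: if_splits)
  next
    case 2
    then have "X \<noteq> i'-2" "X \<noteq> i'" using assms(3) by auto
    then have "gen5 a i' j' X Y = - complex_of_real a * (if X = i'-1 \<and> Y = j' then 1 else 0)" using e by simp
    then show False using g' A by (simp split: if_splits)
  next
    case 3
    then have "X \<noteq> i'-2" "X \<noteq> i'-1" using assms(3) by auto
    then have "gen5 a i' j' X Y = complex_of_real a * (if X = i' \<and> Y = j'-1 then 1 else 0)" using e by simp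
    then show False using g' A by (simp split: if_splits)
  next
    case 4
    then have "gen5 a i' j' X Y = 0" using e by simp
    then show False using g' by simp
  qed
qed



theorem theorem5p5:
  fixes m n :: nat and a :: real
  assumes "min m n \<ge> 4" and "a = 3 \<or> a > 5"
  shows "(\<forall>\<psi>\<in>S5 m n a. \<psi> \<noteq> 0 \<longrightarrow> \<not> schmidt_rank m n \<psi> \<le> 3)
         \<and> tdim (S5 m n a) = (m - 3) * (n - 3)"
proof -
  interpret V: vector_space tscale by (rule vector_space_tscale)
  have m4: "m \<ge> 4" and n4: "n \<ge> 4" using assms(1) by auto
  have a3: "a = 3 \<or> a > 3" using assms(2) by auto
  define ac where "ac = complex_of_real a"
  define G where "G = {gen5 a i j | i j. 2 \<le> i \<and> i \<le> m - 2 \<and> 2 \<le> j \<and> j \<le> n - 2}"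
  define good where "good L \<longleftrightarrow> (\<forall>i j. L i j \<noteq> (0::complex) \<longrightarrow> 2 \<le> i \<and> i \<le> m-2 \<and> 2 \<le> j \<and> j \<le> n-2)" for L
  define Phi :: "(nat \<Rightarrow> nat \<Rightarrow> complex) \<Rightarrow> tensor" where
    "Phi L = (\<lambda>x y. L (x+2) (y-1) - ac * L (x+1) y + ac * L x (y+1) - L (x-1) (y+2))" for L
  define T where "T = {Phi L | L. good L}"
  have S5G: "S5 m n a = tspan G" by (simp add: S5_def G_def)
  have subT: "V.subspace T"
    unfolding V.subspace_def
  proof (intro conjI ballI allI)
    show "0 \<in> T" unfolding T_def
      by (rule CollectI, rule exI[of _ "\<lambda>_ _. 0"]) (auto simp: good_def Phi_def fun_eq_iff)
  next
    fix x y assume "x \<in> T" "y \<in> T"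
    then obtain L1 L2 where g1: "good L1" and g2: "good L2" and xy: "x = Phi L1" "y = Phi L2" by (auto simp: T_def)
    have "x + y = Phi (\<lambda>i j. L1 i j + L2 i j)" unfolding xy by (simp add: Phi_def fun_eq_iff algebra_simps)
    moreover have "good (\<lambda>i j. L1 i j + L2 i j)" unfolding good_def
    proof (intro allI impI)
      fix i j assume "L1 i j + L2 i j \<noteq> 0"
      then have "L1 i j \<noteq> 0 \<or> L2 i j \<noteq> 0" by auto
      then show "2 \<le> i \<and> i \<le> m-2 \<and> 2 \<le> j \<and> j \<le> n-2" using g1 g2 unfolding good_def by blast
    qed
    ultimately show "x + y \<in> T" unfolding T_def by blast
  next
    fix c x assume "x \<in> T"
    then obtain L where g1: "good L" and xL: "x = Phi L" by (auto simp: T_def)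
    have "tscale c x = Phi (\<lambda>i j. c * L i j)" unfolding xL by (simp add: Phi_def fun_eq_iff algebra_simps tscale_def)
    moreover have "good (\<lambda>i j. c * L i j)" using g1 unfolding good_def by auto
    ultimately show "tscale c x \<in> T" unfolding T_def by blast
  qed
  have GT: "G \<subseteq> T"
  proof
    fix v assume "v \<in> G"
    then obtain i j where ij: "2 \<le> i" "i \<le> m - 2" "2 \<le> j" "j \<le> n - 2" and v: "v = gen5 a i j"
      by (auto simp: G_def)
    define L where "L x y = (if x = i \<and> y = j then 1 else (0::complex))" for x y
    have "good L" using ij by (auto simp: good_def L_def)
    moreover have "v = Phi L"
    proof (intro ext)
      fix x y
      have c: "(x = i-2) = (x+2 = i)" "(y = j+1) = (y-1 = j)" "(x = i-1) = (x+1 = i)"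
        "(y = j-1) = (y+1 = j)" "(x = i+1) = (x-1 = i)" "(y = j-2) = (y+2 = j)"
        using ij by auto
      show "v x y = Phi L x y" unfolding v gen5_apply Phi_def L_def ac_def c by simp
    qed
    ultimately show "v \<in> T" by (auto simp: T_def)
  qed
  have ST: "S5 m n a \<subseteq> T" unfolding S5G by (rule V.span_minimal[OF GT subT])
  have part1: "\<forall>\<psi>\<in>S5 m n a. \<psi> \<noteq> 0 \<longrightarrow> \<not> schmidt_rank m n \<psi> \<le> 3"
  proof (intro ballI impI notI)
    fix \<psi> assume psiS: "\<psi> \<in> S5 m n a" and psi0: "\<psi> \<noteq> 0" and sr: "schmidt_rank m n \<psi> \<le> 3"
    obtain L where gL: "good L" and psiL: "\<psi> = Phi L" using ST psiS by (auto simp: T_def)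
    have Lz: "L i j = 0" if "i < 2 \<or> j < 2 \<or> i > m-2 \<or> j > n-2" for i j
      using gL that unfolding good_def by force
    have box: "x < m \<and> y < n" if "\<psi> x y \<noteq> 0" for x y
    proof -
      have "L (x+2) (y-1) \<noteq> 0 \<or> L (x+1) y \<noteq> 0 \<or> L x (y+1) \<noteq> 0 \<or> L (x-1) (y+2) \<noteq> 0"
        using that unfolding psiL Phi_def by auto
      then show ?thesis using gL m4 n4 unfolding good_def by fastforce
    qed
    have Lnz: "\<exists>i j. L i j \<noteq> 0"
    proof (rule ccontr)
      assume "\<not> (\<exists>i j. L i j \<noteq> 0)"
      then have "\<psi> = 0" unfolding psiL Phi_def by (simp add: fun_eq_iff)
      then show False using psi0 by simp
    qed
    define Ds where "Ds = {i + j | i j. L i j \<noteq> 0}"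
    have Dsfin: "finite Ds"
    proof (rule finite_subset)
      show "Ds \<subseteq> {..m+n}" unfolding Ds_def using gL unfolding good_def by fastforce
    qed simp
    have Dsne: "Ds \<noteq> {}" using Lnz unfolding Ds_def by blast
    define D where "D = Min Ds"
    obtain i0 j0 where L0: "L i0 j0 \<noteq> 0" and D0: "i0 + j0 = D"
    proof -
      have "D \<in> Ds" unfolding D_def using Min_in[OF Dsfin Dsne] .
      then show ?thesis using that unfolding Ds_def by blast
    qed
    have Dmin: "D \<le> i + j" if "L i j \<noteq> 0" for i j
      using Min_le[OF Dsfin] that unfolding D_def Ds_def by blast
    have i02: "2 \<le> i0" and j02: "2 \<le> j0" using gL L0 unfolding good_def by auto
    have D4: "D \<ge> 4" using D0 i02 j02 by simp
    define rho where "rho k = L (k+2) (D-k-2)" for k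
    define N where "N = D - 4"
    define d0 where "d0 = D - 1"
    have Nd: "N + 3 = d0" using D4 by (simp add: N_def d0_def)
    have supp: "\<forall>k>N. rho k = 0"
    proof (intro allI impI)
      fix k assume "N < k"
      then have "D-k-2 < 2" using D4 by (simp add: N_def)
      then show "rho k = 0" using Lz by (simp add: rho_def)
    qed
    have nz: "rho (i0-2) \<noteq> 0"
    proof -
      have "i0 - 2 + 2 = i0" "D - (i0-2) - 2 = j0" using i02 D0 by auto
      then show ?thesis using L0 by (simp only: rho_def) simp
    qed
    define g where "g x = \<psi> x (d0 - x)" for x
    have gdef: "\<forall>x\<le>N+3. g x = rho x - of_real a * sh 1 rho x + of_real a * sh 2 rho x - sh 3 rho x"
    proof (intro allI impI)
      fix x assume "x \<le> N+3"
      then have xd: "x \<le> D - 1" using Nd d0_def by simp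
      have t1: "L (x+2) (d0-x-1) = rho x" using xd by (simp add: rho_def d0_def)
      have t2: "L (x+1) (d0-x) = sh 1 rho x"
      proof (cases "1 \<le> x")
        case True
        then show ?thesis using xd by (simp add: rho_def d0_def sh_def)
      next
        case False
        then show ?thesis using Lz by (simp add: sh_def)
      qed
      have t3: "L x (d0-x+1) = sh 2 rho x"
      proof (cases "2 \<le> x")
        case True
        then have "d0-x+1 = D-(x-2)-2" "x - 2 + 2 = x" using xd D4 by (simp_all add: d0_def)
        then show ?thesis using True by (simp only: rho_def sh_def) simp
      next
        case False
        then show ?thesis using Lz by (simp add: sh_def)
      qed
      have t4: "L (x-1) (d0-x+2) = sh 3 rho x"
      proof (cases "3 \<le> x")
        case True
        then have "d0-x+2 = D-(x-3)-2" "x - 3 + 2 = x - 1" using xd D4 by (simp_all add: d0_def)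
        then show ?thesis using True by (simp only: rho_def sh_def) simp
      next
        case False
        then have "x - 1 < 2" by simp
        then show ?thesis using Lz False by (simp add: sh_def)
      qed
      have "g x = L (x+2) (d0-x-1) - ac * L (x+1) (d0-x) + ac * L x (d0-x+1) - L (x-1) (d0-x+2)"
        by (simp add: g_def psiL Phi_def)
      then show "g x = rho x - of_real a * sh 1 rho x + of_real a * sh 2 rho x - sh 3 rho x"
        using t1 t2 t3 t4 by (simp add: ac_def)
    qed
    define A where "A = {x. x \<le> N+3 \<and> g x \<noteq> 0}"
    have cA: "\<not> card A \<le> 3" unfolding A_def by (rule sparse[OF a3 supp nz gdef])
    have below: "\<psi> x y = 0" if "x + y < d0" for x y
    proof -
      have "L (x+2) (y-1) = 0"
      proof (cases "y = 0")
        case True then show ?thesis using Lz by simp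
      next
        case False then show ?thesis using Dmin[of "x+2" "y-1"] that by (force simp: d0_def)
      qed
      moreover have "L (x+1) y = 0" using Dmin[of "x+1" y] that by (force simp: d0_def)
      moreover have "L x (y+1) = 0" using Dmin[of x "y+1"] that by (force simp: d0_def)
      moreover have "L (x-1) (y+2) = 0"
      proof (cases "x = 0")
        case True then show ?thesis using Lz by simp
      next
        case False then show ?thesis using Dmin[of "x-1" "y+2"] that by (force simp: d0_def)
      qed
      ultimately show ?thesis by (simp add: psiL Phi_def)
    qed
    have ex: "\<exists>u v :: nat \<Rightarrow> nat \<Rightarrow> complex. \<forall>i<m. \<forall>j<n. \<psi> i j = (\<Sum>l<m. u l i * v l j)"
    proof (intro exI allI impI)
      fix i j assume "i < m" "j < n"
      then show "\<psi> i j = (\<Sum>l<m. (\<lambda>l i. if l = i then 1 else 0) l i * (\<lambda>l j. \<psi> l j) l j)"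
      proof -
        have "(\<Sum>l<m. (\<lambda>l i. if l = i then 1 else 0) l i * (\<lambda>l j. \<psi> l j) l j)
              = (\<Sum>l<m. if l = i then \<psi> l j else 0)" by (intro sum.cong) auto
        also have "\<dots> = \<psi> i j" using \<open>i < m\<close> by simp
        finally show ?thesis by simp
      qed
    qed
    obtain u v :: "nat \<Rightarrow> nat \<Rightarrow> complex" where uv: "\<forall>i<m. \<forall>j<n. \<psi> i j = (\<Sum>l<schmidt_rank m n \<psi>. u l i * v l j)"
    proof -
      have "\<exists>r. \<exists>u v :: nat \<Rightarrow> nat \<Rightarrow> complex. \<forall>i<m. \<forall>j<n. \<psi> i j = (\<Sum>l<r. u l i * v l j)"
        using ex by blast
      from LeastI_ex[OF this] show ?thesis using that unfolding schmidt_rank_def by blast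
    qed
    have "card A \<le> schmidt_rank m n \<psi>"
    proof (rule tri_rank[where M = "\<lambda>x y. \<psi> x (d0 - y)" and u = u and v = "\<lambda>l b. v l (d0 - b)"])
      show "finite A" by (simp add: A_def)
      show "\<forall>x\<in>A. \<forall>y\<in>A. x < y \<longrightarrow> \<psi> x (d0 - y) = 0"
        using below Nd by (auto simp: A_def)
      show "\<forall>x\<in>A. \<psi> x (d0 - x) \<noteq> 0" by (simp add: A_def g_def)
      show "\<forall>x\<in>A. \<forall>y\<in>A. \<psi> x (d0 - y) = (\<Sum>l<schmidt_rank m n \<psi>. u l x * v l (d0 - y))"
      proof (intro ballI)
        fix x y assume x: "x \<in> A" and y: "y \<in> A"
        have "x < m" using box[of x "d0 - x"] x by (simp add: A_def g_def)
        moreover have "d0 - y < n" using box[of y "d0 - y"] y by (simp add: A_def g_def)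
        ultimately show "\<psi> x (d0 - y) = (\<Sum>l<schmidt_rank m n \<psi>. u l x * v l (d0 - y))" using uv by simp
      qed
    qed
    then show False using cA sr by simp
  qed
  have indep: "\<not> V.dependent G"
  proof
    assume "V.dependent G"
    then obtain t u where ft: "finite t" and tG: "t \<subseteq> G" and s0: "(\<Sum>v\<in>t. tscale (u v) v) = 0"
      and ex1: "\<exists>v\<in>t. u v \<noteq> 0"
      unfolding V.dependent_explicit by blast
    define Is where "Is = {i. \<exists>j. 2 \<le> i \<and> i \<le> m - 2 \<and> 2 \<le> j \<and> j \<le> n - 2 \<and> gen5 a i j \<in> t \<and> u (gen5 a i j) \<noteq> 0}"
    have fIs: "finite Is" by (rule finite_subset[of _ "{..m}"]) (auto simp: Is_def)
    have neIs: "Is \<noteq> {}"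
    proof -
      obtain v where "v \<in> t" "u v \<noteq> 0" using ex1 by blast
      moreover then obtain i j where "2 \<le> i" "i \<le> m - 2" "2 \<le> j" "j \<le> n - 2" "v = gen5 a i j"
        using tG by (auto simp: G_def)
      ultimately have "i \<in> Is" unfolding Is_def by blast
      then show ?thesis by blast
    qed
    define i0 where "i0 = Max Is"
    have "i0 \<in> Is" unfolding i0_def using fIs neIs by (rule Max_in)
    then obtain j0 where r0: "2 \<le> i0" "i0 \<le> m - 2" "2 \<le> j0" "j0 \<le> n - 2" and v0t: "gen5 a i0 j0 \<in> t"
      and uv0: "u (gen5 a i0 j0) \<noteq> 0" by (auto simp: Is_def)
    define v0 where "v0 = gen5 a i0 j0"
    have v0v: "v0 (i0+1) (j0-2) = -1" unfolding v0_def using r0 gen5_at[of i0 j0 i0 j0 a] by simp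
    have tm: "u v * v (i0+1) (j0-2) = (if v = v0 then - u v0 else 0)" if vt: "v \<in> t" for v
    proof -
      obtain i j where r: "2 \<le> i" "i \<le> m - 2" "2 \<le> j" "j \<le> n - 2" and v: "v = gen5 a i j"
        using vt tG by (auto simp: G_def)
      show ?thesis
      proof (cases "u v = 0")
        case True
        then have "v \<noteq> v0" using uv0 v0_def by auto
        then show ?thesis using True by simp
      next
        case False
        then have "i \<in> Is" using r v vt by (auto simp: Is_def)
        then have ii0: "i \<le> i0" unfolding i0_def using fIs by simp
        have val: "v (i0+1) (j0-2) = (if i = i0 \<and> j = j0 then -1 else 0)"
          unfolding v using r r0 ii0 gen5_at[of i j i0 j0 a] by simp
        show ?thesis
        proof (cases "i = i0 \<and> j = j0")
          case True
          then have "v = v0" by (simp add: v v0_def)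
          then show ?thesis using v0v by simp
        next
          case False
          then have "v \<noteq> v0" using val v0v by auto
          then show ?thesis using val False by simp
        qed
      qed
    qed
    have "0 = (\<Sum>v\<in>t. tscale (u v) v) (i0+1) (j0-2)" using s0 by simp
    also have "\<dots> = (\<Sum>v\<in>t. u v * v (i0+1) (j0-2))" by (simp add: tsum_apply tscale_def)
    also have "\<dots> = (\<Sum>v\<in>t. if v = v0 then - u v0 else 0)" using tm by (intro sum.cong) auto
    also have "\<dots> = - u v0" using ft v0t by (simp add: v0_def)
    finally show False using uv0 by (simp add: v0_def)
  qed
  define I where "I = {2..m-2} \<times> {2..n-2}"
  have GI: "G = (\<lambda>(i,j). gen5 a i j) ` I" unfolding G_def I_def by (auto simp: image_iff) blast
  have inj: "inj_on (\<lambda>(i,j). gen5 a i j) I"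
  proof (rule inj_onI, clarify)
    fix i j i' j' assume ij: "(i,j) \<in> I" "(i',j') \<in> I" and e: "gen5 a i j = gen5 a i' j'"
    have "gen5 a i' j' (i+1) (j-2) = -1" using e ij gen5_at[of i j i j a] by (auto simp: I_def)
    then show "i = i' \<and> j = j'" using gen5_inj[of i j i' j' a] ij a3 by (auto simp: I_def)
  qed
  have cI: "card I = (m-3)*(n-3)" using m4 n4 by (simp add: I_def card_cartesian_product)
  have "tdim (S5 m n a) = card G" unfolding S5G by (rule V.dim_span_eq_card_independent[OF indep])
  also have "\<dots> = (m-3)*(n-3)" unfolding GI using card_image[OF inj] cI by simp
  finally show ?thesis using part1 by simp
qed
end
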